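(* Assume the model (M.2) and the sub-Gaussian condition (A.4) described in the context, and let Algorithm 2 be applied to $X_1,\ldots,X_N$. For $k\in\{1,\ldots,M_0+1\}$ let $E_{k,N}$ be the event that there exist integers $0\le n_1<n_2<n_3\le N_k$ such that $\{X^{(k)}_n:n=n_1+1,\ldots,n_2\}$ and $\{X^{(k)}_n:n=n_2+1,\ldots,n_3\}$ are two (consecutive) detected segments. Assume $f(N)\ge C\log N$, where $C>16D/c_0$ is a constant. Then $\Pr(\limsup_{N\to\infty}E_{k,N})=0$.
   Context: Model (M.2): for each sample size $N$ one observes independent random vectors $X_1,\ldots,X_N\in\mathbb{R}^D$ ($D\in\mathbb{N}$ fixed). There are $M_0\ge 0$ (fixed) change points $0=L_0<L_1<\cdots<L_{M_0}<L_{M_0+1}=N$ (depending on $N$), with segment sizes $N_k=L_k-L_{k-1}$, $N_k\to\infty$; for each $k$, $X_{L_{k-1}+1},\ldots,X_{L_k}$ are i.i.d. with distribution $\mathcal{G}_k$ with mean $\mu_k$ and finite covariance; $\mu_k\neq\mu_{k+1}$. Write $X^{(k)}_n=X_{L_{k-1}+n}$, $n=1,\ldots,N_k$. (A.4): there is $c_0>0$ such that for every $k$, coordinate $d$, $n\ge1$ and $a>0$, the mean $\bar Z$ of $n$ i.i.d. copies of the $d$-th marginal of $\mathcal{G}_k$ satisfies $\Pr(|\bar Z-E\bar Z|\ge a)\le2e^{-c_0a^2n}$. Quadratic loss: $\mathrm{Loss}_q(x_a,\ldots,x_b)=\sum_{n=a}^b|x_n-\bar x|^2$, $\bar x$ the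 sample mean. Algorithm 2 (inputs $M_{\max}\ge1$, penalty $f(N)>0$, minimal segment size $\beta(N)$): for $k=0,1,\ldots,M_{\max}$ compute $\hat e_k=\min\sum_{j=1}^{k+1}\mathrm{Loss}_q(x_{\ell_{j-1}+1},\ldots,x_{\ell_j})$ over $0=\ell_0<\ell_1<\cdots<\ell_{k+1}=N$ with a minimizer; if its smallest segment has size $<\beta(N)$, set $M=k-1$ and stop (else $M=M_{\max}$). Output $\hat M=\arg\min_{0\le k\le M}(\hat e_k+kf(N))$ and the change points $\hat\ell_1<\cdots<\hat\ell_{\hat M}$ of the minimizer for $k=\hat M$. The detected segments are the blocks $\{X_n:n=\hat\ell_{j-1}+1,\ldots,\hat\ell_j\}$, $j=1,\ldots,\hat M+1$ ($\hat\ell_0=0,\hat\ell_{\hat M+1}=N$); two detected segments are consecutive if they are neighbors. $\limsup_N E_N$ is the event that $E_N$ occurs for infinitely many $N$. *)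

theory Defs
  imports "HOL-Probability.Probability"
begin

text \<open>Data of sample size N: a function x with x n the n-th observation, n = 1..N.
  Change-point candidates: a list ls = [l_1,...,l_k]; boundaries 0 # ls @ [N].\<close>

definition seg_mean :: "(nat \<Rightarrow> real^'d) \<Rightarrow> nat \<Rightarrow> nat \<Rightarrow> real^'d" where
  "seg_mean x a b = (1 / real (b - a)) *\<^sub>R (\<Sum>n\<in>{a<..b}. x n)"

definition seg_loss :: "(nat \<Rightarrow> real^'d) \<Rightarrow> nat \<Rightarrow> nat \<Rightarrow> real" where
  "seg_loss x a b = (\<Sum>n\<in>{a<..b}. (norm (x n - seg_mean x a b))^2)"

definition bounds :: "nat \<Rightarrow> nat list \<Rightarrow> nat list" where
  "bounds N ls = 0 # ls @ [N]"

definition admissible :: "nat \<Rightarrow> nat \<Rightarrow> nat list \<Rightarrow> bool" where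
  "admissible N k ls \<longleftrightarrow> length ls = k \<and> sorted_wrt (<) (bounds N ls)"

definition part_cost :: "(nat \<Rightarrow> real^'d) \<Rightarrow> nat \<Rightarrow> nat list \<Rightarrow> real" where
  "part_cost x N ls = (\<Sum>j<length ls + 1. seg_loss x (bounds N ls ! j) (bounds N ls ! Suc j))"

definition opt_part :: "(nat \<Rightarrow> real^'d) \<Rightarrow> nat \<Rightarrow> nat \<Rightarrow> nat list" where
  "opt_part x N k = arg_min (part_cost x N) (admissible N k)"

definition e_hat :: "(nat \<Rightarrow> real^'d) \<Rightarrow> nat \<Rightarrow> nat \<Rightarrow> real" where
  "e_hat x N k = part_cost x N (opt_part x N k)"

definition min_seg :: "nat \<Rightarrow> nat list \<Rightarrow> nat" where
  "min_seg N ls = Min {bounds N ls ! Suc j - bounds N ls ! j | j. j < length ls + 1}"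

text \<open>Stopping index M of Algorithm 2 (loop k = 0,1,...,Mmax).\<close>
definition alg2_M :: "(nat \<Rightarrow> real^'d) \<Rightarrow> nat \<Rightarrow> nat \<Rightarrow> nat \<Rightarrow> nat" where
  "alg2_M x N Mmax beta =
     (if \<exists>k\<le>Mmax. min_seg N (opt_part x N k) < beta
      then (LEAST k. k \<le> Mmax \<and> min_seg N (opt_part x N k) < beta) - 1
      else Mmax)"

definition alg2_Mhat :: "(nat \<Rightarrow> real^'d) \<Rightarrow> nat \<Rightarrow> nat \<Rightarrow> real \<Rightarrow> nat \<Rightarrow> nat" where
  "alg2_Mhat x N Mmax fN beta =
     arg_min (\<lambda>k. e_hat x N k + real k * fN) (\<lambda>k. k \<le> alg2_M x N Mmax beta)"

definition alg2_cps :: "(nat \<Rightarrow> real^'d) \<Rightarrow> nat \<Rightarrow> nat \<Rightarrow> real \<Rightarrow> nat \<Rightarrow> nat list" where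
  "alg2_cps x N Mmax fN beta = opt_part x N (alg2_Mhat x N Mmax fN beta)"

definition detected_segments ::
  "(nat \<Rightarrow> real^'d) \<Rightarrow> nat \<Rightarrow> nat \<Rightarrow> real \<Rightarrow> nat \<Rightarrow> nat set set" where
  "detected_segments x N Mmax fN beta =
     (let ls = alg2_cps x N Mmax fN beta; bd = bounds N ls
      in {{bd ! j + 1 .. bd ! Suc j} | j. j < length ls + 1})"

end

theory Submission
  imports Defs
begin


lemma argmin_fin:
  fixes f :: "'b \<Rightarrow> 'a::linorder"
  assumes "finite {x. P x}" "P w"
  shows "P (arg_min f P) \<and> (\<forall>y. P y \<longrightarrow> f (arg_min f P) \<le> f y)"
proof -
  obtain z where "is_arg_min f (\<lambda>x. x \<in> {x. P x}) z"
    using ex_is_arg_min_if_finite[OF assms(1), of f] assms(2) by blast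
  then have "is_arg_min f P z" by simp
  then have "is_arg_min f P (arg_min f P)" unfolding arg_min_def by (rule someI)
  then show ?thesis by (simp add: is_arg_min_linorder)
qed

lemma admissible_finite: "finite {ls. admissible N k ls}"
proof (rule finite_subset[OF _ finite_lists_length_eq[of "{..<N}" k]])
  show "{ls. admissible N k ls} \<subseteq> {xs. set xs \<subseteq> {..<N} \<and> length xs = k}"
    by (auto simp: admissible_def bounds_def sorted_wrt_append)
qed auto

lemma admissible_ex: "k < N \<Longrightarrow> admissible N k [1..<k+1]"
  by (auto simp: admissible_def bounds_def sorted_wrt_append)

lemma opt_part_prop:
  assumes "k < N"
  shows "admissible N k (opt_part x N k) \<and>
         (\<forall>ls. admissible N k ls \<longrightarrow> e_hat x N k \<le> part_cost x N ls)"
  using argmin_fin[OF admissible_finite admissible_ex[OF assms], of "part_cost x N"]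
  by (simp add: e_hat_def opt_part_def)

fun cl :: "(nat \<Rightarrow> nat \<Rightarrow> real) \<Rightarrow> nat list \<Rightarrow> real" where
  "cl g (u # v # r) = g u v + cl g (v # r)"
| "cl g _ = 0"

lemma cl_sum: "(\<Sum>i<length l - 1. g (l ! i) (l ! Suc i)) = cl g l"
proof (induction g l rule: cl.induct)
  case (1 g u v r)
  have "(\<Sum>i<length (u # v # r) - 1. g ((u # v # r) ! i) ((u # v # r) ! Suc i))
      = (\<Sum>i<Suc (length r). g ((u # v # r) ! i) ((u # v # r) ! Suc i))" by simp
  also have "\<dots> = g u v + (\<Sum>i<length r. g ((v # r) ! i) ((v # r) ! Suc i))"
    by (subst sum.lessThan_Suc_shift) simp
  finally show ?case using 1 by simp
qed auto

lemma part_cost_cl: "part_cost x N ls = cl (seg_loss x) (bounds N ls)"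
  unfolding part_cost_def cl_sum[symmetric] by (simp add: bounds_def)

lemma cl_merge: "cl g (xs @ [a, b, c] @ ys) = cl g (xs @ [a, c] @ ys) + g a b + g b c - g a c"
proof (induction xs)
  case Nil then show ?case by simp
next
  case (Cons y xs)
  then show ?case by (cases xs) auto
qed

lemma alg2_M_le: "alg2_M x N Mmax beta \<le> Mmax"
proof (cases "\<exists>k\<le>Mmax. min_seg N (opt_part x N k) < beta")
  case True
  then have "(LEAST k. k \<le> Mmax \<and> min_seg N (opt_part x N k) < beta) \<le> Mmax"
    by (metis (mono_tags, lifting) LeastI_ex)
  then show ?thesis using True by (simp add: alg2_M_def)
qed (auto simp: alg2_M_def)

lemma Mhat_prop:
  "alg2_Mhat x N Mmax fN beta \<le> alg2_M x N Mmax beta \<and>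
   (\<forall>y. y \<le> alg2_M x N Mmax beta \<longrightarrow>
      e_hat x N (alg2_Mhat x N Mmax fN beta) + real (alg2_Mhat x N Mmax fN beta) * fN
        \<le> e_hat x N y + real y * fN)"
  unfolding alg2_Mhat_def
  by (rule argmin_fin[where w=0]) auto

lemma Icc_nonempty_eq:
  assumes "{p..q} = {(r::nat)..s}" "p \<le> q"
  shows "p = r \<and> q = s"
  using assms by (metis Icc_eq_Icc atLeastatMost_empty_iff2 order_less_le_trans not_le)

lemma detected_merge:
  assumes N: "Mmax < N"
    and s1: "{a+1..b} \<in> detected_segments x N Mmax fN beta"
    and s2: "{b+1..c} \<in> detected_segments x N Mmax fN beta"
    and ab: "a < b" and bc: "b < c"
  shows "fN \<le> seg_loss x a c - seg_loss x a b - seg_loss x b c"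
proof -
  define M' where "M' = alg2_M x N Mmax beta"
  define m where "m = alg2_Mhat x N Mmax fN beta"
  have M'le: "M' \<le> Mmax" unfolding M'_def by (rule alg2_M_le)
  have mM: "m \<le> M'" and gm: "\<And>y. y \<le> M' \<Longrightarrow> e_hat x N m + real m * fN \<le> e_hat x N y + real y * fN"
    using Mhat_prop[of x N Mmax fN beta] unfolding M'_def m_def by auto
  define ls where "ls = opt_part x N m"
  have mN: "m < N" using mM M'le N by simp
  have adm: "admissible N m ls" and ehm: "e_hat x N m = part_cost x N ls"
    using opt_part_prop[OF mN, of x] unfolding ls_def by (auto simp: e_hat_def)
  define bd where "bd = bounds N ls"
  have lenbd: "length bd = m + 2" and lenls: "length ls = m"
    using adm by (auto simp: bd_def bounds_def admissible_def)
  have sbd: "sorted_wrt (<) bd" using adm by (simp add: bd_def admissible_def)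
  have dsdef: "detected_segments x N Mmax fN beta = {{bd ! j + 1 .. bd ! Suc j} | j. j < length ls + 1}"
    unfolding detected_segments_def bd_def ls_def m_def alg2_cps_def Let_def by simp
  have ends: "\<exists>j. j < m + 1 \<and> bd ! j = p \<and> bd ! Suc j = q"
    if pq: "{p+1..q} \<in> detected_segments x N Mmax fN beta" "p < q" for p q
  proof -
    obtain j' where j': "j' < length ls + 1" "{bd ! j' + 1 .. bd ! Suc j'} = {p+1..q}"
      using pq(1) unfolding dsdef by blast
    have "p + 1 \<le> q" using pq(2) by simp
    then have "bd ! j' + 1 = p + 1 \<and> bd ! Suc j' = q"
      using Icc_nonempty_eq[of "p+1" q "bd ! j' + 1" "bd ! Suc j'"] j'(2) by auto
    then show ?thesis using j'(1) lenls by auto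
  qed
  obtain j where j: "j < m + 1" "bd ! j = a" "bd ! Suc j = b" using ends[OF s1 ab] by blast
  obtain j' where j': "j' < m + 1" "bd ! j' = b" "bd ! Suc j' = c" using ends[OF s2 bc] by blast
  have jj: "j' = Suc j"
  proof (rule ccontr)
    assume "j' \<noteq> Suc j"
    then consider "j' < Suc j" | "Suc j < j'" by linarith
    then show False
    proof cases
      case 1
      then have "bd ! j' < bd ! Suc j" using sorted_wrt_nth_less[OF sbd 1] lenbd j by simp
      then show False using j j' by simp
    next
      case 2
      then have "bd ! Suc j < bd ! j'" using sorted_wrt_nth_less[OF sbd 2] lenbd j' by simp
      then show False using j j' by simp
    qed
  qed
  have jm: "j < m" using j' jj by simp
  define ls' where "ls' = take j ls @ drop (Suc j) ls"
  have b': "bd = take (Suc j) bd @ [b] @ drop (Suc (Suc j)) bd"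
  proof -
    have "drop (Suc j) bd = b # drop (Suc (Suc j)) bd"
      using Cons_nth_drop_Suc[of "Suc j" bd] j lenbd by simp
    then show ?thesis using append_take_drop_id[of "Suc j" bd] by simp
  qed
  have bl': "bounds N ls' = take (Suc j) bd @ drop (Suc (Suc j)) bd"
    using jm lenls by (simp add: bounds_def bd_def ls'_def)
  have adm': "admissible N (m - 1) ls'"
  proof -
    have "length ls' = m - 1" using jm lenls by (simp add: ls'_def)
    moreover have "sorted_wrt (<) (bounds N ls')"
      using sbd b' unfolding bl' by (smt (verit) sorted_wrt_append append_Cons append_Nil list.set_intros(2) sorted_wrt.simps(2))
    ultimately show ?thesis by (simp add: admissible_def)
  qed
  have tk: "take (Suc j) bd = take j bd @ [a]"
    using j lenbd by (simp add: take_Suc_conv_app_nth)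
  have dr: "drop (Suc (Suc j)) bd = c # drop (Suc (Suc (Suc j))) bd"
    using Cons_nth_drop_Suc[of "Suc (Suc j)" bd] j' jj lenbd jm by simp
  have c1: "part_cost x N ls = cl (seg_loss x) (take j bd @ [a, b, c] @ drop (Suc (Suc (Suc j))) bd)"
    using b' tk dr by (simp add: part_cost_cl bd_def)
  have c2: "part_cost x N ls' = cl (seg_loss x) (take j bd @ [a, c] @ drop (Suc (Suc (Suc j))) bd)"
    using bl' tk dr by (simp add: part_cost_cl)
  have e1: "e_hat x N (m - 1) \<le> part_cost x N ls'"
    using opt_part_prop[of "m - 1" N x] mN adm' by auto
  have "e_hat x N m + real m * fN \<le> e_hat x N (m - 1) + real (m - 1) * fN"
    using gm[of "m - 1"] mM by simp
  moreover have "real (m - 1) = real m - 1" using jm by simp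
  ultimately show ?thesis using e1 c1 c2 ehm cl_merge[of "seg_loss x" "take j bd" a b c "drop (Suc (Suc (Suc j))) bd"]
    by (simp add: algebra_simps)
qed



lemma sum_seg_mean: "a < b \<Longrightarrow> (\<Sum>n\<in>{a<..b}. x n) = real (b - a) *\<^sub>R seg_mean x a b"
  by (simp add: seg_mean_def)

lemma seg_decomp:
  fixes x :: "nat \<Rightarrow> real^'d"
  assumes "a < b"
  shows "(\<Sum>n\<in>{a<..b}. (norm (x n - \<mu>))^2) = seg_loss x a b + real (b - a) * (norm (seg_mean x a b - \<mu>))^2"
proof -
  define m where "m = seg_mean x a b"
  have "(\<Sum>n\<in>{a<..b}. (norm (x n - \<mu>))^2)
      = (\<Sum>n\<in>{a<..b}. (norm (x n - m))^2 + 2 * inner (x n - m) (m - \<mu>) + (norm (m - \<mu>))^2)"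
  proof (rule sum.cong[OF refl])
    fix n
    have e: "x n - \<mu> = (x n - m) + (m - \<mu>)" by simp
    show "(norm (x n - \<mu>))^2 = (norm (x n - m))^2 + 2 * inner (x n - m) (m - \<mu>) + (norm (m - \<mu>))^2"
      unfolding e power2_norm_eq_inner inner_add_left inner_add_right
      by (simp add: inner_commute[of "m - \<mu>" "x n - m"])
  qed
  also have "\<dots> = (\<Sum>n\<in>{a<..b}. (norm (x n - m))^2) + 2 * inner (\<Sum>n\<in>{a<..b}. x n - m) (m - \<mu>)
      + real (b - a) * (norm (m - \<mu>))^2"
    by (simp add: sum.distrib sum_distrib_left inner_sum_left)
  also have "(\<Sum>n\<in>{a<..b}. x n - m) = 0"
    using assms by (simp add: sum_subtractf sum_seg_mean m_def sum_constant_scaleR del: sum_constant)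
  finally show ?thesis by (simp add: seg_loss_def m_def)
qed

lemma seg_loss_le:
  fixes x :: "nat \<Rightarrow> real^'d"
  assumes "a < b"
  shows "seg_loss x a b \<le> (\<Sum>n\<in>{a<..b}. (norm (x n - \<mu>))^2)"
  using seg_decomp[OF assms, of x \<mu>] by simp

lemma merge_bound:
  fixes x :: "nat \<Rightarrow> real^'d"
  assumes "a < b" "b < c"
  shows "seg_loss x a c - seg_loss x a b - seg_loss x b c
    \<le> real (b - a) * (norm (seg_mean x a b - \<mu>))^2 + real (c - b) * (norm (seg_mean x b c - \<mu>))^2"
proof -
  have sp: "{a<..c} = {a<..b} \<union> {b<..c}" "{a<..b} \<inter> {b<..c} = {}" using assms by auto
  have "seg_loss x a c \<le> (\<Sum>n\<in>{a<..c}. (norm (x n - \<mu>))^2)"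
    using assms by (intro seg_loss_le) simp
  also have "\<dots> = (\<Sum>n\<in>{a<..b}. (norm (x n - \<mu>))^2) + (\<Sum>n\<in>{b<..c}. (norm (x n - \<mu>))^2)"
    unfolding sp(1) by (rule sum.union_disjoint) (use sp in auto)
  finally show ?thesis using seg_decomp[OF assms(1), of x \<mu>] seg_decomp[OF assms(2), of x \<mu>] by simp
qed

lemma norm_sq_vec: "(norm (v :: real^'d))^2 = (\<Sum>d\<in>UNIV. (v $ d)^2)"
  by (simp add: norm_vec_def L2_set_def sum_nonneg)

lemma exists_big_comp:
  fixes v :: "real^'d"
  assumes "t \<le> (norm v)^2"
  shows "\<exists>d. t / real CARD('d) \<le> (v $ d)^2"
proof (rule ccontr)
  assume "\<not> ?thesis"
  then have "\<forall>d. (v $ d)^2 < t / real CARD('d)" by (meson not_le)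
  then have "(\<Sum>d\<in>UNIV. (v $ d)^2) < (\<Sum>d\<in>(UNIV::'d set). t / real CARD('d))"
    using sum_strict_mono[of "UNIV::'d set" "\<lambda>d. (v $ d)^2" "\<lambda>d. t / real CARD('d)"] by auto
  also have "\<dots> = t" by simp
  finally show False using assms norm_sq_vec[of v] by simp
qed



lemma sum_shift_block: "a < b \<Longrightarrow> (\<Sum>j\<in>{a<..b}. f j) = (\<Sum>i<b - a. f (Suc (a + i)))"
  by (rule sum.reindex_bij_witness[of _ "\<lambda>i. Suc (a + i)" "\<lambda>j. j - Suc a"]) auto

lemma block_distr:
  fixes Y :: "nat \<Rightarrow> 'a \<Rightarrow> real^'d" and Gk :: "(real^'d) measure"
  assumes P: "prob_space M"
    and ind: "prob_space.indep_vars M (\<lambda>_. borel) Y S"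
    and sub: "{a<..b} \<subseteq> S"
    and rv: "\<forall>i\<in>{a<..b}. Y i \<in> borel_measurable M"
    and dist: "\<forall>i\<in>{a<..b}. distr M borel (Y i) = Gk"
    and Gp: "prob_space Gk" and Gs: "sets Gk = sets borel"
    and ab: "a < b"
  shows "distr M (PiM {..<b-a} (\<lambda>_. Gk)) (\<lambda>x. \<lambda>i\<in>{..<b-a}. Y (Suc (a + i)) x) = PiM {..<b-a} (\<lambda>_. Gk)"
proof -
  interpret prob_space M by (rule P)
  define K where "K = {a<..b}"
  define I where "I = {..<b-a}"
  define h where "h = (\<lambda>i. Suc (a + i))"
  have indK: "indep_vars (\<lambda>_. borel) Y K" using indep_vars_subset[OF ind sub] by (simp add: K_def)
  have Kne: "K \<noteq> {}" using ab by (auto simp: K_def)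
  have rvK: "\<And>i. i \<in> K \<Longrightarrow> random_variable borel (Y i)" using rv by (simp add: K_def)
  have D1: "distr M (PiM K (\<lambda>_. borel)) (\<lambda>x. \<lambda>i\<in>K. Y i x) = PiM K (\<lambda>i. distr M borel (Y i))"
    using indep_vars_iff_distr_eq_PiM'[OF Kne rvK] indK by simp
  also have "\<dots> = PiM K (\<lambda>_. Gk)" by (rule PiM_cong) (use dist in \<open>auto simp: K_def\<close>)
  finally have D1': "distr M (PiM K (\<lambda>_. borel)) (\<lambda>x. \<lambda>i\<in>K. Y i x) = PiM K (\<lambda>_. Gk)" .
  have D2: "distr (PiM K (\<lambda>_. Gk)) (PiM I (\<lambda>_. Gk)) (\<lambda>\<omega>. \<lambda>n\<in>I. \<omega> (h n)) = PiM I (\<lambda>_. Gk)"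
  proof -
    have "h \<in> I \<rightarrow> K" by (auto simp: h_def I_def K_def)
    moreover have "inj_on h I" by (auto simp: inj_on_def h_def)
    ultimately show ?thesis using distr_PiM_reindex[of K "\<lambda>_. Gk" h I] Gp by simp
  qed
  have sB: "sets (PiM I (\<lambda>_. Gk)) = sets (PiM I (\<lambda>_. borel))"
    by (rule sets_PiM_cong) (auto simp: Gs)
  have psi: "(\<lambda>\<omega>. \<lambda>n\<in>I. \<omega> (h n)) \<in> measurable (PiM K (\<lambda>_. borel)) (PiM I (\<lambda>_. Gk))"
    unfolding measurable_cong_sets[OF refl sB]
    by (rule measurable_restrict) (auto simp: h_def I_def K_def)
  have g: "(\<lambda>x. \<lambda>i\<in>K. Y i x) \<in> measurable M (PiM K (\<lambda>_. borel))"
    by (rule measurable_restrict) (use rvK in auto)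
  have "distr M (PiM I (\<lambda>_. Gk)) ((\<lambda>\<omega>. \<lambda>n\<in>I. \<omega> (h n)) \<circ> (\<lambda>x. \<lambda>i\<in>K. Y i x)) = PiM I (\<lambda>_. Gk)"
    using distr_distr[OF psi g] D1' D2 by simp
  moreover have "((\<lambda>\<omega>. \<lambda>n\<in>I. \<omega> (h n)) \<circ> (\<lambda>x. \<lambda>i\<in>K. Y i x)) = (\<lambda>x. \<lambda>i\<in>I. Y (h i) x)"
    by (auto simp: fun_eq_iff h_def I_def K_def)
  ultimately show ?thesis by (simp add: I_def h_def)
qed

lemma block_prob:
  fixes Y :: "nat \<Rightarrow> 'a \<Rightarrow> real^'d" and Gk :: "(real^'d) measure"
  assumes P: "prob_space M"
    and ind: "prob_space.indep_vars M (\<lambda>_. borel) Y S"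
    and sub: "{a<..b} \<subseteq> S"
    and rv: "\<forall>i\<in>{a<..b}. Y i \<in> borel_measurable M"
    and dist: "\<forall>i\<in>{a<..b}. distr M borel (Y i) = Gk"
    and Gp: "prob_space Gk" and Gs: "sets Gk = sets borel"
    and ab: "a < b"
    and A4: "measure (PiM {..<b-a} (\<lambda>_. Gk))
                 {z \<in> space (PiM {..<b-a} (\<lambda>_. Gk)).
                    \<bar>(\<Sum>i<b-a. z i $ d) / real (b-a) - \<mu>d\<bar> \<ge> t} \<le> B"
  shows "measure M {\<omega> \<in> space M. t \<le> \<bar>seg_mean (\<lambda>n. Y n \<omega>) a b $ d - \<mu>d\<bar>} \<le> B"
proof -
  define I where "I = {..<b-a}"
  define Bm where "Bm = PiM I (\<lambda>_. Gk)"
  define Phi where "Phi = (\<lambda>x. \<lambda>i\<in>I. Y (Suc (a + i)) x)"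
  define S' where "S' = {z \<in> space Bm. \<bar>(\<Sum>i<b-a. z i $ d) / real (b-a) - \<mu>d\<bar> \<ge> t}"
  have D: "distr M Bm Phi = Bm"
    using block_distr[OF P ind sub rv dist Gp Gs ab] by (simp add: Bm_def Phi_def I_def)
  have sB: "sets Bm = sets (PiM I (\<lambda>_. borel))"
    unfolding Bm_def by (rule sets_PiM_cong) (auto simp: Gs)
  have Phim: "Phi \<in> measurable M Bm"
    unfolding measurable_cong_sets[OF refl sB] Phi_def
    by (rule measurable_restrict) (use rv in \<open>auto simp: I_def\<close>)
  have S'm: "S' \<in> sets Bm"
  proof -
    have "(\<lambda>z. \<bar>(\<Sum>i<b-a. z i $ d) / real (b-a) - \<mu>d\<bar>) \<in> borel_measurable (PiM I (\<lambda>_. borel))"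
    proof -
      have vm: "(\<lambda>v::real^'d. v $ d) \<in> borel_measurable borel"
        by (intro borel_measurable_continuous_onI linear_continuous_on bounded_linear_vec_nth)
      have "(\<lambda>z::nat \<Rightarrow> real^'d. z i $ d) \<in> borel_measurable (PiM I (\<lambda>_. borel))" if "i \<in> I" for i
        using measurable_comp[OF measurable_component_singleton[OF that, of "\<lambda>_. borel"] vm]
        by (simp add: o_def)
      then show ?thesis unfolding I_def by measurable
    qed
    then have "(\<lambda>z. \<bar>(\<Sum>i<b-a. z i $ d) / real (b-a) - \<mu>d\<bar>) \<in> borel_measurable Bm"
      using measurable_cong_sets[OF sB refl] by blast
    then show ?thesis unfolding S'_def by measurable
  qed
  have spB: "space Bm = space (PiM I (\<lambda>_. borel))" using sets_eq_imp_space_eq[OF sB] .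
  have eq: "{\<omega> \<in> space M. t \<le> \<bar>seg_mean (\<lambda>n. Y n \<omega>) a b $ d - \<mu>d\<bar>} = Phi -` S' \<inter> space M"
  proof -
    have "seg_mean (\<lambda>n. Y n \<omega>) a b $ d = (\<Sum>i<b-a. Phi \<omega> i $ d) / real (b-a)" for \<omega>
      using ab by (simp add: seg_mean_def sum_shift_block Phi_def I_def sum_component)
    moreover have "Phi \<omega> \<in> space Bm" for \<omega>
      unfolding spB by (simp add: space_PiM Phi_def)
    ultimately show ?thesis unfolding S'_def by auto
  qed
  have "measure M {\<omega> \<in> space M. t \<le> \<bar>seg_mean (\<lambda>n. Y n \<omega>) a b $ d - \<mu>d\<bar>} = measure (distr M Bm Phi) S'"
    unfolding eq by (rule measure_distr[OF Phim S'm, symmetric])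
  also have "\<dots> = measure Bm S'" by (simp add: D)
  also have "\<dots> \<le> B" using A4 by (simp add: S'_def Bm_def I_def)
  finally show ?thesis .
qed



lemma exp_bound:
  fixes c0 C D fN :: real and N :: nat
  assumes c0: "c0 > 0" and D: "D > 0" and C: "C > 16 * D / c0"
    and f: "fN \<ge> C * ln (real N)" and N: "N \<ge> 1"
  shows "2 * exp (- (c0 * (fN / (2 * D)))) \<le> 2 / real N ^ 4"
proof -
  have lnN: "ln (real N) \<ge> 0" using N by simp
  have "16 * D < C * c0" using C c0 by (simp add: field_simps)
  then have q: "c0 * C / (2 * D) \<ge> 4" using D by (simp add: field_simps)
  have "4 * ln (real N) \<le> (c0 * C / (2 * D)) * ln (real N)"
    using q lnN by (intro mult_right_mono) auto
  also have "\<dots> = (c0 / (2 * D)) * (C * ln (real N))" by simp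
  also have "\<dots> \<le> (c0 / (2 * D)) * fN" using f c0 D by (intro mult_left_mono) auto
  finally have le: "4 * ln (real N) \<le> c0 * (fN / (2 * D))" by simp
  have "exp (- (c0 * (fN / (2 * D)))) \<le> exp (- (4 * ln (real N)))" using le by simp
  also have "exp (- (4 * ln (real N))) = inverse (exp (ln (real N ^ 4)))"
    using N by (simp add: ln_realpow exp_minus)
  also have "\<dots> = 1 / real N ^ 4" using N by (simp add: divide_inverse)
  finally show ?thesis by simp
qed

lemma seg_comp_meas:
  fixes Y :: "nat \<Rightarrow> 'a \<Rightarrow> real^'d"
  assumes "\<forall>i\<in>{a<..b}. Y i \<in> borel_measurable M"
  shows "(\<lambda>\<omega>. seg_mean (\<lambda>n. Y n \<omega>) a b $ d) \<in> borel_measurable M"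
proof -
  have vm: "(\<lambda>v::real^'d. v $ d) \<in> borel_measurable borel"
    by (intro borel_measurable_continuous_onI linear_continuous_on bounded_linear_vec_nth)
  have "(\<lambda>\<omega>. Y i \<omega> $ d) \<in> borel_measurable M" if "i \<in> {a<..b}" for i
    using measurable_comp[OF bspec[OF assms that] vm] by (simp add: o_def)
  then have "(\<lambda>\<omega>. \<Sum>i\<in>{a<..b}. Y i \<omega> $ d) \<in> borel_measurable M"
    by (intro borel_measurable_sum) auto
  then have "(\<lambda>\<omega>. (1 / real (b - a)) * (\<Sum>i\<in>{a<..b}. Y i \<omega> $ d)) \<in> borel_measurable M"
    by measurable
  then show ?thesis by (simp add: seg_mean_def sum_component)
qed

lemma sqrt_le_abs: "t \<le> y^2 \<Longrightarrow> sqrt t \<le> \<bar>y::real\<bar>"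
  by (metis real_sqrt_abs real_sqrt_le_mono)

lemma bad_one:
  fixes x :: "nat \<Rightarrow> real^'d"
  assumes "p < q" "fN / 2 \<le> real (q - p) * (norm (seg_mean x p q - \<mu>))^2"
  shows "\<exists>d. sqrt (fN / (2 * real CARD('d) * real (q - p))) \<le> \<bar>seg_mean x p q $ d - \<mu> $ d\<bar>"
proof -
  have pos: "real (q - p) > 0" using assms(1) by simp
  have "fN / (2 * real (q - p)) \<le> (norm (seg_mean x p q - \<mu>))^2"
    using assms(2) pos by (simp add: field_simps)
  then obtain d where "fN / (2 * real (q - p)) / real CARD('d) \<le> ((seg_mean x p q - \<mu>) $ d)^2"
    using exists_big_comp by blast
  then have "fN / (2 * real CARD('d) * real (q - p)) \<le> (seg_mean x p q $ d - \<mu> $ d)^2"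
    by (simp add: field_simps)
  then show ?thesis using sqrt_le_abs by blast
qed

lemma bad_block:
  fixes x :: "nat \<Rightarrow> real^'d"
  assumes N: "Mmax < N"
    and s1: "{a+1..b} \<in> detected_segments x N Mmax fN beta"
    and s2: "{b+1..c} \<in> detected_segments x N Mmax fN beta"
    and ab: "a < b" and bc: "b < c"
  shows "\<exists>p q d. ((p = a \<and> q = b) \<or> (p = b \<and> q = c)) \<and>
           sqrt (fN / (2 * real CARD('d) * real (q - p))) \<le> \<bar>seg_mean x p q $ d - \<mu> $ d\<bar>"
proof -
  have "fN \<le> real (b - a) * (norm (seg_mean x a b - \<mu>))^2 + real (c - b) * (norm (seg_mean x b c - \<mu>))^2"
    using detected_merge[OF N s1 s2 ab bc] merge_bound[OF ab bc, of x \<mu>] by linarith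
  then consider "fN / 2 \<le> real (b - a) * (norm (seg_mean x a b - \<mu>))^2"
    | "fN / 2 \<le> real (c - b) * (norm (seg_mean x b c - \<mu>))^2" by linarith
  then show ?thesis
  proof cases
    case 1 then show ?thesis using bad_one[OF ab 1] by blast
  next
    case 2 then show ?thesis using bad_one[OF bc 2] by blast
  qed
qed



lemma L_mono_le:
  fixes L :: "nat \<Rightarrow> nat"
  assumes "\<forall>j\<le>M0. L j < L (Suc j)"
  shows "i \<le> j \<Longrightarrow> j \<le> M0 + 1 \<Longrightarrow> L i \<le> L j"
proof (induction j)
  case 0 then show ?case by simp
next
  case (Suc j)
  show ?case
  proof (cases "i = Suc j")
    case False
    then have "i \<le> j" using Suc by simp
    then have "L i \<le> L j" using Suc by simp
    also have "L j < L (Suc j)" using assms Suc by simp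
    finally show ?thesis by simp
  qed simp
qed

theorem lemma4:
  fixes M :: "'a measure"
    and X :: "nat \<Rightarrow> nat \<Rightarrow> 'a \<Rightarrow> real^'d"
    and M0 :: nat
    and L :: "nat \<Rightarrow> nat \<Rightarrow> nat"
    and G :: "nat \<Rightarrow> (real^'d) measure"
    and c0 C :: real
    and Mmax :: nat
    and f :: "nat \<Rightarrow> real"
    and beta :: "nat \<Rightarrow> nat"
    and k :: nat
  assumes P: "prob_space M"
    and rv: "\<forall>\<^sub>F N in sequentially. \<forall>n\<in>{1..N}. X N n \<in> borel_measurable M"
    and indep: "\<forall>\<^sub>F N in sequentially. prob_space.indep_vars M (\<lambda>_. borel) (X N) {1..N}"
    and L0: "\<forall>\<^sub>F N in sequentially. L N 0 = 0"
    and Lend: "\<forall>\<^sub>F N in sequentially. L N (M0 + 1) = N"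
    and Lmono: "\<forall>\<^sub>F N in sequentially. \<forall>j\<le>M0. L N j < L N (Suc j)"
    and Nk_inf: "\<forall>j\<in>{1..M0+1}. filterlim (\<lambda>N. L N j - L N (j - 1)) at_top sequentially"
    and distr: "\<forall>\<^sub>F N in sequentially. \<forall>j\<in>{1..M0+1}. \<forall>n\<in>{L N (j - 1) + 1 .. L N j}.
                  distr M borel (X N n) = G j"
    and Gprob: "\<forall>j\<in>{1..M0+1}. prob_space (G j)"
    and Gsets: "\<forall>j\<in>{1..M0+1}. sets (G j) = sets borel"
    and mean: "\<forall>j\<in>{1..M0+1}. integrable (G j) (\<lambda>x. x)"
    and cov: "\<forall>j\<in>{1..M0+1}. integrable (G j) (\<lambda>x. (norm x)^2)"
    and mean_change: "\<forall>j\<in>{1..M0}. (\<integral>x. x \<partial>G j) \<noteq> (\<integral>x. x \<partial>G (Suc j))"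
    and c0: "c0 > 0"
    and A4: "\<forall>j\<in>{1..M0+1}. \<forall>d. \<forall>n\<ge>1. \<forall>a>0.
               measure (PiM {..<n} (\<lambda>_. G j))
                 {z \<in> space (PiM {..<n} (\<lambda>_. G j)).
                    \<bar>(\<Sum>i<n. z i $ d) / real n - (\<integral>x. x $ d \<partial>G j)\<bar> \<ge> a}
               \<le> 2 * exp (- c0 * a^2 * real n)"
    and Mmax: "Mmax \<ge> 1"
    and fpos: "\<forall>N. f N > 0"
    and C: "C > 16 * real CARD('d) / c0"
    and fC: "\<forall>N. f N \<ge> C * ln (real N)"
    and k: "k \<in> {1..M0+1}"
  shows "AE \<omega> in M. \<not> (\<exists>\<^sub>F N in sequentially.
           (\<exists>n1 n2 n3. n1 < n2 \<and> n2 < n3 \<and> n3 \<le> L N k - L N (k - 1) \<and>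
              {L N (k - 1) + n1 + 1 .. L N (k - 1) + n2}
                \<in> detected_segments (\<lambda>n. X N n \<omega>) N Mmax (f N) (beta N) \<and>
              {L N (k - 1) + n2 + 1 .. L N (k - 1) + n3}
                \<in> detected_segments (\<lambda>n. X N n \<omega>) N Mmax (f N) (beta N)))"
proof -
  interpret P: prob_space M by (rule P)
  define D where "D = real CARD('d)"
  have Dpos: "D > 0" by (simp add: D_def)
  define \<mu> :: "real^'d" where "\<mu> = (\<chi> d. \<integral>x. x $ d \<partial>G k)"
  have k1: "1 \<le> k" "k \<le> M0 + 1" using k by auto
  have ev: "\<forall>\<^sub>F N in sequentially. (\<forall>n\<in>{1..N}. X N n \<in> borel_measurable M) \<and>
      prob_space.indep_vars M (\<lambda>_. borel) (X N) {1..N} \<and> L N (M0 + 1) = N \<and>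
      (\<forall>j\<le>M0. L N j < L N (Suc j)) \<and>
      (\<forall>j\<in>{1..M0+1}. \<forall>n\<in>{L N (j - 1) + 1 .. L N j}. distr M borel (X N n) = G j) \<and> Mmax < N"
    using rv indep Lend Lmono distr eventually_gt_at_top[of Mmax]
    by (auto simp: eventually_conj_iff)
  then obtain N0 where N0: "\<And>N. N \<ge> N0 \<Longrightarrow> (\<forall>n\<in>{1..N}. X N n \<in> borel_measurable M) \<and>
      prob_space.indep_vars M (\<lambda>_. borel) (X N) {1..N} \<and> L N (M0 + 1) = N \<and>
      (\<forall>j\<le>M0. L N j < L N (Suc j)) \<and>
      (\<forall>j\<in>{1..M0+1}. \<forall>n\<in>{L N (j - 1) + 1 .. L N j}. distr M borel (X N n) = G j) \<and> Mmax < N"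
    by (auto simp: eventually_sequentially)
  define off where "off N = L N (k - 1)" for N
  define top where "top N = L N k" for N
  have offtop: "off N < top N" "top N \<le> N" if "N \<ge> N0" for N
  proof -
    have lm: "\<forall>j\<le>M0. L N j < L N (Suc j)" and le: "L N (M0 + 1) = N" using N0[OF that] by auto
    show "off N < top N" using lm k1 unfolding off_def top_def
      by (metis Suc_diff_le diff_Suc_1 le_add_diff_inverse2 add_le_cancel_right)
    show "top N \<le> N" using L_mono_le[OF lm, of k "M0 + 1"] k1 le by (simp add: top_def)
  qed
  define Bad where "Bad N a b d = {\<omega> \<in> space M. sqrt (f N / (2 * D * real (b - a)))
      \<le> \<bar>seg_mean (\<lambda>n. X N n \<omega>) a b $ d - \<mu> $ d\<bar>}" for N a b d
  define F where "F N = (if N0 \<le> N then (\<Union>a\<in>{off N..<top N}. \<Union>b\<in>{a<..top N}. \<Union>d\<in>UNIV. Bad N a b d) else {})" for N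
  have blk: "{a<..b} \<subseteq> {1..N}" "\<forall>i\<in>{a<..b}. X N i \<in> borel_measurable M"
     "\<forall>i\<in>{a<..b}. distr M borel (X N i) = G k"
    if "N \<ge> N0" "off N \<le> a" "b \<le> top N" for N a b
  proof -
    show s: "{a<..b} \<subseteq> {1..N}" using offtop[OF that(1)] that by auto
    show "\<forall>i\<in>{a<..b}. X N i \<in> borel_measurable M" using N0[OF that(1)] s by auto
    have "\<forall>n\<in>{L N (k - 1) + 1 .. L N k}. distr M borel (X N n) = G k" using N0[OF that(1)] k by auto
    then show "\<forall>i\<in>{a<..b}. distr M borel (X N i) = G k" using that by (auto simp: off_def top_def)
  qed
  have Bad_meas: "Bad N a b d \<in> sets M" if "N \<ge> N0" "off N \<le> a" "b \<le> top N" for N a b d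
  proof -
    have [measurable]: "(\<lambda>\<omega>. seg_mean (\<lambda>n. X N n \<omega>) a b $ d) \<in> borel_measurable M"
      using seg_comp_meas blk(2)[OF that] by blast
    show ?thesis unfolding Bad_def by measurable
  qed
  have Bad_prob: "measure M (Bad N a b d) \<le> 2 / real N ^ 4"
    if "N \<ge> N0" "off N \<le> a" "a < b" "b \<le> top N" for N a b d
  proof -
    define t where "t = sqrt (f N / (2 * D * real (b - a)))"
    have fpos': "f N > 0" using fpos by simp
    have tpos: "t > 0" unfolding t_def using fpos' Dpos that(3) by simp
    have t2: "c0 * t^2 * real (b - a) = c0 * (f N / (2 * D))"
      unfolding t_def using fpos' Dpos that(3) by (simp add: field_simps)
    have A4k: "measure (PiM {..<b-a} (\<lambda>_. G k))
                 {z \<in> space (PiM {..<b-a} (\<lambda>_. G k)).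
                    \<bar>(\<Sum>i<b-a. z i $ d) / real (b-a) - \<mu> $ d\<bar> \<ge> t}
               \<le> 2 * exp (- c0 * t^2 * real (b-a))"
      using bspec[OF A4 k, rule_format, of "b - a" t d] tpos that(3) by (simp add: \<mu>_def)
    have "measure M (Bad N a b d) \<le> 2 * exp (- c0 * t^2 * real (b-a))"
      unfolding Bad_def t_def[symmetric]
      using block_prob[OF P _ blk(1)[OF that(1,2,4)] blk(2)[OF that(1,2,4)] blk(3)[OF that(1,2,4)]
          _ _ that(3) A4k] N0[OF that(1)] Gprob Gsets k by auto
    also have "\<dots> = 2 * exp (- (c0 * (f N / (2 * D))))" using t2 by simp
    also have "\<dots> \<le> 2 / real N ^ 4"
      using exp_bound[OF c0 Dpos, where C=C and fN="f N" and N=N] C fC N0[OF that(1)] Mmax by (simp add: D_def)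
    finally show ?thesis .
  qed
  have F_meas: "F N \<in> sets M" for N
    unfolding F_def using Bad_meas by (auto intro!: sets.finite_UN)
  have F_prob: "measure M (F N) \<le> 2 * D * inverse (real N ^ 2)" for N
  proof (cases "N0 \<le> N")
    case False then show ?thesis using Dpos by (simp add: F_def)
  next
    case True
    have N1: "real N \<ge> 1" using N0[OF True] Mmax by simp
    have inner: "measure M (\<Union>d\<in>UNIV. Bad N a b d) \<le> D * (2 / real N ^ 4)"
      if "off N \<le> a" "a < b" "b \<le> top N" for a b
    proof -
      have "measure M (\<Union>d\<in>UNIV. Bad N a b d) \<le> (\<Sum>d\<in>UNIV. measure M (Bad N a b d))"
        by (rule measure_UNION_le) (use Bad_meas True that in auto)
      also have "\<dots> \<le> of_nat (card (UNIV::'d set)) * (2 / real N ^ 4)"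
        by (rule sum_bounded_above) (use Bad_prob True that in auto)
      finally show ?thesis by (simp add: D_def)
    qed
    have mid: "measure M (\<Union>b\<in>{a<..top N}. \<Union>d\<in>UNIV. Bad N a b d) \<le> real N * (D * (2 / real N ^ 4))"
      if "off N \<le> a" "a < top N" for a
    proof -
      have "measure M (\<Union>b\<in>{a<..top N}. \<Union>d\<in>UNIV. Bad N a b d)
          \<le> (\<Sum>b\<in>{a<..top N}. measure M (\<Union>d\<in>UNIV. Bad N a b d))"
        by (rule measure_UNION_le) (use Bad_meas True that in \<open>auto intro!: sets.finite_UN\<close>)
      also have "\<dots> \<le> of_nat (card {a<..top N}) * (D * (2 / real N ^ 4))"
        by (rule sum_bounded_above) (use inner that in auto)
      also have "\<dots> \<le> real N * (D * (2 / real N ^ 4))"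
        using offtop[OF True] Dpos by (intro mult_right_mono) auto
      finally show ?thesis .
    qed
    have "measure M (F N) \<le> (\<Sum>a\<in>{off N..<top N}. measure M (\<Union>b\<in>{a<..top N}. \<Union>d\<in>UNIV. Bad N a b d))"
    proof -
      have eqF: "F N = (\<Union>a\<in>{off N..<top N}. \<Union>b\<in>{a<..top N}. \<Union>d\<in>UNIV. Bad N a b d)"
        using True by (simp add: F_def)
      show ?thesis unfolding eqF
        by (rule measure_UNION_le) (use Bad_meas True in \<open>auto intro!: sets.finite_UN\<close>)
    qed
    also have "\<dots> \<le> of_nat (card {off N..<top N}) * (real N * (D * (2 / real N ^ 4)))"
      by (rule sum_bounded_above) (use mid in auto)
    also have "\<dots> \<le> real N * (real N * (D * (2 / real N ^ 4)))"
      using offtop[OF True] Dpos by (intro mult_right_mono) auto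
    also have "\<dots> = 2 * D * inverse (real N ^ 2)" using N1 by (simp add: field_simps power_def)
    finally show ?thesis .
  qed
  have summ: "summable (\<lambda>N. measure M (F N))"
  proof (rule summable_comparison_test)
    show "\<exists>N'. \<forall>N\<ge>N'. norm (measure M (F N)) \<le> 2 * D * inverse (real N ^ 2)"
      using F_prob by auto
    show "summable (\<lambda>N. 2 * D * inverse (real N ^ 2))"
      by (intro summable_mult inverse_power_summable) simp
  qed
  have BC: "AE \<omega> in M. eventually (\<lambda>N. \<omega> \<in> space M - F N) sequentially"
    by (rule borel_cantelli_AE1[OF F_meas _ summ]) (simp add: P.emeasure_finite less_top[symmetric])
  show ?thesis
  proof (rule AE_mp[OF BC], rule AE_I2, rule impI)
    fix \<omega> assume \<omega>: "\<omega> \<in> space M" and evF: "eventually (\<lambda>N. \<omega> \<in> space M - F N) sequentially"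
    have "eventually (\<lambda>N. N0 \<le> N \<and> \<omega> \<notin> F N) sequentially"
      using evF eventually_ge_at_top[of N0] by eventually_elim auto
    then show "\<not> (\<exists>\<^sub>F N in sequentially.
           (\<exists>n1 n2 n3. n1 < n2 \<and> n2 < n3 \<and> n3 \<le> L N k - L N (k - 1) \<and>
              {L N (k - 1) + n1 + 1 .. L N (k - 1) + n2}
                \<in> detected_segments (\<lambda>n. X N n \<omega>) N Mmax (f N) (beta N) \<and>
              {L N (k - 1) + n2 + 1 .. L N (k - 1) + n3}
                \<in> detected_segments (\<lambda>n. X N n \<omega>) N Mmax (f N) (beta N)))"
      unfolding not_frequently
    proof (rule eventually_mono, safe)
      fix N n1 n2 n3
      assume NN: "N0 \<le> N" "\<omega> \<notin> F N" and n: "n1 < n2" "n2 < n3" "n3 \<le> L N k - L N (k - 1)"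
        and s1: "{L N (k - 1) + n1 + 1 .. L N (k - 1) + n2} \<in> detected_segments (\<lambda>n. X N n \<omega>) N Mmax (f N) (beta N)"
        and s2: "{L N (k - 1) + n2 + 1 .. L N (k - 1) + n3} \<in> detected_segments (\<lambda>n. X N n \<omega>) N Mmax (f N) (beta N)"
      have MN: "Mmax < N" using N0[OF NN(1)] by simp
      obtain p q d where pq: "(p = off N + n1 \<and> q = off N + n2) \<or> (p = off N + n2 \<and> q = off N + n3)"
        and big: "sqrt (f N / (2 * real CARD('d) * real (q - p))) \<le> \<bar>seg_mean (\<lambda>n. X N n \<omega>) p q $ d - \<mu> $ d\<bar>"
        using bad_block[OF MN s1 s2, of \<mu>] n unfolding off_def by auto
      have ot: "off N < top N" "off N + n3 \<le> top N" using offtop[OF NN(1)] n(3)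
        by (auto simp: off_def top_def)
      have "\<omega> \<in> Bad N p q d" unfolding Bad_def D_def using \<omega> big by simp
      moreover have "p \<in> {off N..<top N}" "q \<in> {p<..top N}" using pq n ot by auto
      ultimately have "\<omega> \<in> (\<Union>a\<in>{off N..<top N}. \<Union>b\<in>{a<..top N}. \<Union>d\<in>UNIV. Bad N a b d)"
        by blast
      then have "\<omega> \<in> F N" unfolding F_def using NN(1) by simp
      then show False using NN(2) by simp
    qed
  qed
qed

end
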